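(* Fix $d \geq 2$. There exists a constant $c = c(d)$ such that for all $n$ large enough, all integers $k \geq n/(3d)$ and all $\theta \geq 1/(2d)$, the number of $(d-1)$-dimensional subcomplexes $X$ of the simplex on $n$ vertices with $|X| = k$ and $\beta(X) \leq (1-\theta)kn$ is at most $$\left(c\, n^{(d-1)\left(1 - \theta\left(1 - \frac{1}{2d^2}\right)\right)}\right)^k.$$
   Context: A $(d-1)$-dimensional subcomplex $X$ of the simplex on $[n]$ is identified with its set of $(d-1)$-faces, and $|X|$ is their number. $\beta(X)$ is the number of $d$-faces of the full simplex on $[n]$ that contain exactly one $(d-1)$-face of $X$. *)

theory Defs
  imports Complex_Main
begin

text \<open>Faces of the full simplex on the vertex set [n] = {0..<n} with exactly j vertices
  (i.e. (j-1)-dimensional faces).\<close>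
definition faces :: "nat \<Rightarrow> nat \<Rightarrow> nat set set" where
  "faces n j = {\<sigma>. \<sigma> \<subseteq> {0..<n} \<and> card \<sigma> = j}"

definition beta :: "nat \<Rightarrow> nat \<Rightarrow> nat set set \<Rightarrow> nat" where
  "beta n d X = card {\<sigma> \<in> faces n (d+1). card {\<tau> \<in> X. \<tau> \<subseteq> \<sigma>} = 1}"

end

theory Submission
  imports Defs
begin

lemma pow_fact_le_exp:
  fixes x :: real assumes "x \<ge> 0"
  shows "x ^ j / fact j \<le> exp x"
proof -
  obtain t where t: "exp x = (\<Sum>m<Suc j. x ^ m / fact m) + exp t / fact (Suc j) * x ^ Suc j"
    using Maclaurin_exp_le by blast
  have "x ^ j / fact j \<le> (\<Sum>m<Suc j. x ^ m / fact m)"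
    using assms by (intro member_le_sum) auto
  moreover have "0 \<le> exp t / fact (Suc j) * x ^ Suc j" using assms by simp
  ultimately show ?thesis using t by linarith
qed

lemma card_subsets_le:
  assumes "finite S"
  shows "card {B. B \<subseteq> S \<and> card B \<le> m} \<le> (card S + 1) ^ m"
proof (induction m)
  case 0
  have "{B. B \<subseteq> S \<and> card B \<le> 0} \<subseteq> {{}}" using assms by (auto dest: finite_subset)
  then have "card {B. B \<subseteq> S \<and> card B \<le> 0} \<le> card {{}::'a set}" by (intro card_mono) auto
  then show ?case by simp
next
  case (Suc m)
  let ?P = "{B. B \<subseteq> S \<and> card B \<le> m}"
  have finP: "finite ?P" by (rule finite_subset[of _ "Pow S"]) (use assms in auto)
  have sub: "{B. B \<subseteq> S \<and> card B \<le> Suc m} \<subseteq> ?P \<union> (\<lambda>(x,B). insert x B) ` (S \<times> ?P)"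
  proof
    fix B assume B: "B \<in> {B. B \<subseteq> S \<and> card B \<le> Suc m}"
    show "B \<in> ?P \<union> (\<lambda>(x,B). insert x B) ` (S \<times> ?P)"
    proof (cases "card B \<le> m")
      case True then show ?thesis using B by auto
    next
      case False
      then have "B \<noteq> {}" by auto
      then obtain x where x: "x \<in> B" by auto
      have fB: "finite B" using B assms finite_subset by auto
      have "B = insert x (B - {x})" using x by auto
      moreover have "card (B - {x}) \<le> m" using B x fB by auto
      moreover have "(x, B - {x}) \<in> S \<times> ?P" using B x \<open>card (B - {x}) \<le> m\<close> by auto
      ultimately have "B \<in> (\<lambda>(x,B). insert x B) ` (S \<times> ?P)"
        by (metis (no_types, lifting) case_prod_conv image_eqI)
      then show ?thesis by blast
    qed
  qed
  have "card {B. B \<subseteq> S \<and> card B \<le> Suc m} \<le> card (?P \<union> (\<lambda>(x,B). insert x B) ` (S \<times> ?P))"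
    using sub finP assms by (intro card_mono) auto
  also have "\<dots> \<le> card ?P + card ((\<lambda>(x,B). insert x B) ` (S \<times> ?P))" by (rule card_Un_le)
  also have "\<dots> \<le> card ?P + card (S \<times> ?P)" using card_image_le[of "S \<times> ?P" "\<lambda>(x,B). insert x B"] assms finP by simp
  also have "\<dots> = (card S + 1) * card ?P" by (simp add: card_cartesian_product)
  also have "\<dots> \<le> (card S + 1) * (card S + 1) ^ m" using Suc by (intro mult_le_mono2)
  finally show ?case by simp
qed

lemma finite_faces: "finite (faces n j)"
  unfolding faces_def by (rule finite_subset[of _ "Pow {0..<n}"]) auto

lemma card_faces: "card (faces n j) = n choose j"
  unfolding faces_def using n_subsets[of "{0..<n}" j] by simp

lemma faces_finite_elem: "\<sigma> \<in> faces n j \<Longrightarrow> finite \<sigma>"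
  unfolding faces_def using finite_subset by auto


definition dg :: "nat set set \<Rightarrow> nat set \<Rightarrow> nat" where
  "dg X \<rho> = card {\<tau>\<in>X. \<rho> \<subseteq> \<tau>}"

definition Uf :: "nat \<Rightarrow> nat \<Rightarrow> nat set set \<Rightarrow> nat set \<Rightarrow> nat set set" where
  "Uf n d X \<tau> = {\<sigma> \<in> faces n (d+1). \<tau> \<subseteq> \<sigma> \<and> {\<tau>'\<in>X. \<tau>' \<subseteq> \<sigma>} = {\<tau>}}"

definition heavy :: "nat \<Rightarrow> nat \<Rightarrow> nat \<Rightarrow> nat set set \<Rightarrow> nat set set" where
  "heavy n d q X = {\<rho> \<in> faces n (d-1). n < q * dg X \<rho>}"

definition bad :: "nat \<Rightarrow> nat \<Rightarrow> nat \<Rightarrow> nat set set \<Rightarrow> nat set set" where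
  "bad n d q X = {\<tau>\<in>X. \<forall>\<rho>\<in>heavy n d q X. \<not> \<rho> \<subseteq> \<tau>}"

definition cand :: "nat \<Rightarrow> nat \<Rightarrow> nat set set \<Rightarrow> nat set set" where
  "cand n d H = {\<tau>\<in>faces n d. \<exists>\<rho>\<in>H. \<rho> \<subseteq> \<tau>}"

lemma card_codim1:
  assumes "finite \<tau>" "card \<tau> = d" "d \<ge> 1"
  shows "card {\<rho>. \<rho> \<subseteq> \<tau> \<and> card \<rho> = d - 1} = d"
proof -
  have "card {\<rho>. \<rho> \<subseteq> \<tau> \<and> card \<rho> = d - 1} = d choose (d - 1)"
    using n_subsets[OF assms(1), of "d-1"] assms by simp
  also have "\<dots> = d"
    using assms(3) by (cases d) (auto simp: binomial_symmetric[of "d-1" d])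
  finally show ?thesis .
qed

lemma extend_faces:
  assumes "\<tau> \<in> faces n d"
  shows "card ((\<lambda>w. insert w \<tau>) ` ({0..<n} - \<tau>)) = n - d"
    and "(\<lambda>w. insert w \<tau>) ` ({0..<n} - \<tau>) \<subseteq> faces n (d+1)"
proof -
  have ft: "finite \<tau>" using assms faces_finite_elem by blast
  have t: "\<tau> \<subseteq> {0..<n}" "card \<tau> = d" using assms unfolding faces_def by auto
  have inj: "inj_on (\<lambda>w. insert w \<tau>) ({0..<n} - \<tau>)"
    by (rule inj_onI) (metis DiffD2 insertE insertI1)
  have "card ((\<lambda>w. insert w \<tau>) ` ({0..<n} - \<tau>)) = card ({0..<n} - \<tau>)"
    using card_image[OF inj] .
  also have "\<dots> = n - d" using t ft by (simp add: card_Diff_subset)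
  finally show "card ((\<lambda>w. insert w \<tau>) ` ({0..<n} - \<tau>)) = n - d" .
  show "(\<lambda>w. insert w \<tau>) ` ({0..<n} - \<tau>) \<subseteq> faces n (d+1)"
    using t ft unfolding faces_def by auto
qed


lemma bad_U:
  assumes d1: "d \<ge> 1" and X: "X \<subseteq> faces n d" and tX: "\<tau> \<in> X" and q: "q > 0"
    and light: "\<forall>\<rho>\<in>faces n (d-1). \<rho> \<subseteq> \<tau> \<longrightarrow> q * dg X \<rho> \<le> n"
  shows "real (card (Uf n d X \<tau>)) \<ge> real n - real d - real d * real n / real q"
proof -
  have tf: "\<tau> \<in> faces n d" using X tX by auto
  have ft: "finite \<tau>" using tf faces_finite_elem by blast
  have t: "\<tau> \<subseteq> {0..<n}" "card \<tau> = d" using tf unfolding faces_def by auto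
  have dn: "d \<le> n" using t card_mono[of "{0..<n}" \<tau>] by auto
  define A where "A = (\<lambda>w. insert w \<tau>) ` ({0..<n} - \<tau>)"
  have cA: "card A = n - d" and sA: "A \<subseteq> faces n (d+1)" using extend_faces[OF tf] A_def by auto
  have fA: "finite A" using A_def by simp
  define V where "V = {\<sigma>\<in>A. \<exists>\<tau>'\<in>X. \<tau>' \<subseteq> \<sigma> \<and> \<tau>' \<noteq> \<tau>}"
  have VA: "V \<subseteq> A" using V_def by auto
  have AVU: "A - V \<subseteq> Uf n d X \<tau>"
  proof
    fix \<sigma> assume s: "\<sigma> \<in> A - V"
    then have "\<sigma> \<in> faces n (d+1)" "\<tau> \<subseteq> \<sigma>" using sA A_def by auto
    moreover have nv: "\<not> (\<exists>\<tau>'\<in>X. \<tau>' \<subseteq> \<sigma> \<and> \<tau>' \<noteq> \<tau>)" using s unfolding V_def by blast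
    moreover have "{\<tau>'\<in>X. \<tau>' \<subseteq> \<sigma>} = {\<tau>}" using nv tX \<open>\<tau> \<subseteq> \<sigma>\<close> by blast
    ultimately show "\<sigma> \<in> Uf n d X \<tau>" unfolding Uf_def by auto
  qed
  define R where "R = {\<rho>. \<rho> \<subseteq> \<tau> \<and> card \<rho> = d - 1}"
  have cR: "card R = d" using card_codim1[OF ft t(2) d1] R_def by simp
  have fR: "finite R" unfolding R_def by (rule finite_subset[of _ "Pow \<tau>"]) (use ft in auto)
  have RF: "R \<subseteq> faces n (d-1)" using R_def t unfolding faces_def by auto
  define W where "W = (\<Union>\<rho>\<in>R. {\<tau>'\<in>X. \<rho> \<subseteq> \<tau>'})"
  have fX: "finite X" using X finite_faces finite_subset by blast
  have "card W \<le> (\<Sum>\<rho>\<in>R. card {\<tau>'\<in>X. \<rho> \<subseteq> \<tau>'})" unfolding W_def by (rule card_UN_le[OF fR])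
  then have "q * card W \<le> q * (\<Sum>\<rho>\<in>R. dg X \<rho>)" unfolding dg_def by simp
  also have "\<dots> = (\<Sum>\<rho>\<in>R. q * dg X \<rho>)" by (simp add: sum_distrib_left)
  also have "\<dots> \<le> (\<Sum>\<rho>\<in>R. n)" using light RF R_def by (intro sum_mono) auto
  also have "\<dots> = d * n" using cR by simp
  finally have qW: "q * card W \<le> d * n" .
  have key: "w \<in> \<tau>'" "\<tau>' - {w} \<in> R"
    if w: "w \<in> {0..<n} - \<tau>" and t': "\<tau>' \<in> X" "\<tau>' \<subseteq> insert w \<tau>" "\<tau>' \<noteq> \<tau>" for w \<tau>'
  proof -
    have t'f: "\<tau>' \<in> faces n d" using X t' by auto
    have ft': "finite \<tau>'" using t'f faces_finite_elem by blast
    have ct': "card \<tau>' = d" using t'f unfolding faces_def by auto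
    have "\<not> \<tau>' \<subseteq> \<tau>"
    proof
      assume "\<tau>' \<subseteq> \<tau>"
      then have "\<tau>' = \<tau>" using card_subset_eq[OF ft \<open>\<tau>' \<subseteq> \<tau>\<close>] ct' t(2) by simp
      then show False using t' by simp
    qed
    then show "w \<in> \<tau>'" using t' by auto
    then have "card (\<tau>' - {w}) = d - 1" using ct' ft' by simp
    moreover have "\<tau>' - {w} \<subseteq> \<tau>" using t' by auto
    ultimately show "\<tau>' - {w} \<in> R" unfolding R_def by simp
  qed
  define f where "f \<sigma> = (SOME \<tau>'. \<tau>' \<in> X \<and> \<tau>' \<subseteq> \<sigma> \<and> \<tau>' \<noteq> \<tau>)" for \<sigma>
  have fprop: "f \<sigma> \<in> X \<and> f \<sigma> \<subseteq> \<sigma> \<and> f \<sigma> \<noteq> \<tau>" if "\<sigma> \<in> V" for \<sigma>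
  proof -
    have "\<exists>\<tau>'. \<tau>' \<in> X \<and> \<tau>' \<subseteq> \<sigma> \<and> \<tau>' \<noteq> \<tau>" using that V_def by auto
    then show ?thesis unfolding f_def by (rule someI_ex)
  qed
  have fW: "f ` V \<subseteq> W"
  proof
    fix x assume "x \<in> f ` V"
    then obtain \<sigma> where s: "\<sigma> \<in> V" "x = f \<sigma>" by auto
    then obtain w where w: "w \<in> {0..<n} - \<tau>" "\<sigma> = insert w \<tau>" using s(1) VA unfolding A_def by blast
    have "w \<in> f \<sigma>" "f \<sigma> - {w} \<in> R" using key[OF w(1), of "f \<sigma>"] fprop[OF s(1)] w(2) by auto
    then show "x \<in> W" unfolding W_def using s fprop[OF s(1)] by blast
  qed
  have finj: "inj_on f V"
  proof (rule inj_onI)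
    fix s1 s2 assume s1: "s1 \<in> V" and s2: "s2 \<in> V" and eq: "f s1 = f s2"
    obtain w1 where w1: "w1 \<in> {0..<n} - \<tau>" "s1 = insert w1 \<tau>" using s1 VA unfolding A_def by blast
    obtain w2 where w2: "w2 \<in> {0..<n} - \<tau>" "s2 = insert w2 \<tau>" using s2 VA unfolding A_def by blast
    have "w1 \<in> f s1" using key[OF w1(1), of "f s1"] fprop[OF s1] w1(2) by auto
    moreover have "f s2 \<subseteq> insert w2 \<tau>" using fprop[OF s2] w2 by auto
    ultimately have "w1 = w2" using eq w1(1) by auto
    then show "s1 = s2" using w1 w2 by simp
  qed
  have fW': "finite W" using fX W_def fR by auto
  have cVW: "card V \<le> card W" using card_inj_on_le[OF finj fW fW'] .
  have "card (A - V) \<le> card (Uf n d X \<tau>)"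
    using AVU by (intro card_mono) (auto simp: Uf_def finite_faces)
  moreover have "card (A - V) = card A - card V" using card_Diff_subset[OF finite_subset[OF VA fA] VA] .
  moreover have "card V \<le> card A" using card_mono[OF fA VA] .
  ultimately have "real (card (Uf n d X \<tau>)) \<ge> real (n - d) - real (card V)"
    using cA by (simp add: of_nat_diff[symmetric])
  moreover have "real (n - d) = real n - real d" using dn by simp
  moreover have "real q * real (card V) \<le> real d * real n"
    using qW cVW by (metis le_trans mult_le_mono2 of_nat_le_iff of_nat_mult)
  then have "real (card V) \<le> real d * real n / real q" using q by (simp add: field_simps)
  ultimately show ?thesis by linarith
qed


lemma beta_ge:
  assumes X: "X \<subseteq> faces n d" and T: "T \<subseteq> X"
  shows "(\<Sum>\<tau>\<in>T. card (Uf n d X \<tau>)) \<le> beta n d X"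
proof -
  have fX: "finite X" using X finite_faces finite_subset by blast
  have fT: "finite T" using T fX finite_subset by blast
  have fU: "finite (Uf n d X \<tau>)" for \<tau>
    by (rule finite_subset[of _ "faces n (d+1)"]) (auto simp: Uf_def finite_faces)
  have disj: "Uf n d X a \<inter> Uf n d X b = {}" if "a \<noteq> b" for a b
    using that unfolding Uf_def by auto
  have "(\<Sum>\<tau>\<in>T. card (Uf n d X \<tau>)) = card (\<Union>\<tau>\<in>T. Uf n d X \<tau>)"
    using card_UN_disjoint[OF fT, of "Uf n d X"] fU disj by auto
  also have "\<dots> \<le> beta n d X" unfolding beta_def
    by (rule card_mono) (auto simp: finite_faces Uf_def)
  finally show ?thesis .
qed

lemma card_filter_sum:
  assumes "finite A"
  shows "card {x\<in>A. P x} = (\<Sum>x\<in>A. if P x then 1 else 0)"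
  using sum.inter_filter[OF assms, of "\<lambda>_. 1::nat" P] by simp

lemma heavy_count:
  assumes d1: "d \<ge> 1" and X: "X \<subseteq> faces n d"
  shows "n * card (heavy n d q X) \<le> q * d * card X"
proof -
  let ?H = "heavy n d q X"
  have fX: "finite X" using X finite_faces finite_subset by blast
  have fH: "finite ?H" unfolding heavy_def using finite_faces by auto
  have "(\<Sum>\<rho>\<in>?H. dg X \<rho>) = (\<Sum>\<rho>\<in>?H. \<Sum>\<tau>\<in>X. if \<rho> \<subseteq> \<tau> then 1 else 0)"
    unfolding dg_def using fX by (simp add: card_filter_sum)
  also have "\<dots> = (\<Sum>\<tau>\<in>X. \<Sum>\<rho>\<in>?H. if \<rho> \<subseteq> \<tau> then 1 else 0)" by (rule sum.swap)
  also have "\<dots> = (\<Sum>\<tau>\<in>X. card {\<rho>\<in>?H. \<rho> \<subseteq> \<tau>})"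
    using fH by (simp add: card_filter_sum)
  also have "\<dots> \<le> (\<Sum>\<tau>\<in>X. d)"
  proof (rule sum_mono)
    fix \<tau> assume t: "\<tau> \<in> X"
    then have tf: "\<tau> \<in> faces n d" using X by auto
    then have ft: "finite \<tau>" by (rule faces_finite_elem)
    have ct: "card \<tau> = d" using tf unfolding faces_def by auto
    have "{\<rho>\<in>?H. \<rho> \<subseteq> \<tau>} \<subseteq> {\<rho>. \<rho> \<subseteq> \<tau> \<and> card \<rho> = d - 1}"
      unfolding heavy_def faces_def by auto
    moreover have "finite {\<rho>. \<rho> \<subseteq> \<tau> \<and> card \<rho> = d - 1}"
      by (rule finite_subset[of _ "Pow \<tau>"]) (use ft in auto)
    ultimately have "card {\<rho>\<in>?H. \<rho> \<subseteq> \<tau>} \<le> card {\<rho>. \<rho> \<subseteq> \<tau> \<and> card \<rho> = d - 1}"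
      by (rule card_mono[rotated])
    then show "card {\<rho>\<in>?H. \<rho> \<subseteq> \<tau>} \<le> d" using card_codim1[OF ft ct d1] by simp
  qed
  also have "\<dots> = d * card X" by simp
  finally have s: "(\<Sum>\<rho>\<in>?H. dg X \<rho>) \<le> d * card X" .
  have "n * card ?H = (\<Sum>\<rho>\<in>?H. n)" by simp
  also have "\<dots> \<le> (\<Sum>\<rho>\<in>?H. q * dg X \<rho>)" by (rule sum_mono) (auto simp: heavy_def)
  also have "\<dots> = q * (\<Sum>\<rho>\<in>?H. dg X \<rho>)" by (simp add: sum_distrib_left)
  also have "\<dots> \<le> q * (d * card X)" using s by simp
  finally show ?thesis by (simp add: mult.assoc)
qed

lemma cand_card:
  assumes d1: "d \<ge> 1" and H: "H \<subseteq> faces n (d-1)"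
  shows "card (cand n d H) \<le> card H * n"
proof -
  have fH: "finite H" using H finite_faces finite_subset by blast
  have sub: "cand n d H \<subseteq> (\<Union>\<rho>\<in>H. (\<lambda>w. insert w \<rho>) ` {0..<n})"
  proof
    fix \<tau> assume "\<tau> \<in> cand n d H"
    then obtain \<rho> where r: "\<rho> \<in> H" "\<rho> \<subseteq> \<tau>" and tf: "\<tau> \<in> faces n d" unfolding cand_def by auto
    have ft: "finite \<tau>" using tf faces_finite_elem by blast
    have ct: "card \<tau> = d" "\<tau> \<subseteq> {0..<n}" using tf unfolding faces_def by auto
    have cr: "card \<rho> = d - 1" using r H unfolding faces_def by auto
    have "card (\<tau> - \<rho>) = 1" using card_Diff_subset[OF finite_subset[OF r(2) ft] r(2)] ct cr d1 by simp
    then obtain w where w: "\<tau> - \<rho> = {w}" using card_1_singletonE by blast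
    then have "\<tau> = insert w \<rho>" "w < n" using r(2) ct(2) by auto
    then show "\<tau> \<in> (\<Union>\<rho>\<in>H. (\<lambda>w. insert w \<rho>) ` {0..<n})"
      by (intro UN_I[OF r(1)] image_eqI[of _ _ w]) auto
  qed
  have "card (cand n d H) \<le> card (\<Union>\<rho>\<in>H. (\<lambda>w. insert w \<rho>) ` {0..<n})"
    using sub fH by (intro card_mono) auto
  also have "\<dots> \<le> (\<Sum>\<rho>\<in>H. card ((\<lambda>w. insert w \<rho>) ` {0..<n}))" by (rule card_UN_le[OF fH])
  also have "\<dots> \<le> (\<Sum>\<rho>\<in>H. n)" by (rule sum_mono) (metis card_atLeastLessThan card_image_le finite_atLeastLessThan minus_nat.diff_0)
  finally show ?thesis by simp
qed


lemma choose_le_pow: "n choose s \<le> n ^ s"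
proof -
  have "(n choose s) * 1 \<le> (n choose s) * fact s" by (intro mult_le_mono2) (simp add: fact_ge_1)
  also have "\<dots> \<le> n ^ s" by (rule binomial_fact_pow)
  finally show ?thesis by simp
qed

lemma FH_bound:
  assumes n1: "n \<ge> 1" and d1: "d \<ge> 1"
  shows "card {H. H \<subseteq> faces n (d-1) \<and> n * card H \<le> M} \<le> 2 ^ (d * M)"
proof -
  define m where "m = M div n"
  have sub: "{H. H \<subseteq> faces n (d-1) \<and> n * card H \<le> M} \<subseteq> {H. H \<subseteq> faces n (d-1) \<and> card H \<le> m}"
    unfolding m_def using n1 by (auto simp: less_eq_div_iff_mult_less_eq mult.commute)
  have "card {H. H \<subseteq> faces n (d-1) \<and> n * card H \<le> M} \<le> card {H. H \<subseteq> faces n (d-1) \<and> card H \<le> m}"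
    by (rule card_mono[OF _ sub]) (rule finite_subset[of _ "Pow (faces n (d-1))"], auto simp: finite_faces)
  also have "\<dots> \<le> (card (faces n (d-1)) + 1) ^ m" by (rule card_subsets_le[OF finite_faces])
  also have "\<dots> \<le> (2 ^ (n * (d-1) + 1)) ^ m"
  proof (rule power_mono)
    have "card (faces n (d-1)) \<le> n ^ (d-1)" using card_faces choose_le_pow by simp
    also have "\<dots> \<le> (2 ^ n) ^ (d-1)" by (intro power_mono) (auto intro: less_imp_le less_exp)
    also have "\<dots> = 2 ^ (n * (d-1))" by (simp add: power_mult)
    finally have "card (faces n (d-1)) \<le> 2 ^ (n * (d-1))" .
    moreover have "(1::nat) \<le> 2 ^ (n * (d-1))" by simp
    ultimately show "card (faces n (d-1)) + 1 \<le> 2 ^ (n * (d-1) + 1)"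
      unfolding power_add power_one_right by linarith
  qed simp
  also have "\<dots> = 2 ^ ((d-1) * (n * m) + m)"
  proof -
    have "(n * (d-1) + 1) * m = (d-1) * (n * m) + m" by (simp add: add_mult_distrib mult.commute mult.left_commute)
    then show ?thesis by (metis power_mult)
  qed
  also have "\<dots> \<le> 2 ^ (d * M)"
  proof (rule power_increasing)
    have nm: "n * m \<le> M" unfolding m_def by (simp add: mult.commute)
    have mM: "m \<le> M" unfolding m_def by simp
    have "(d-1) * (n * m) + m \<le> (d-1) * M + M" using nm mM by (intro add_mono mult_le_mono2) auto
    also have "\<dots> = d * M" using d1 by (cases d) auto
    finally show "(d-1) * (n * m) + m \<le> d * M" .
  qed simp
  finally show ?thesis .
qed

lemma FB_bound:
  assumes n1: "n \<ge> 1" and d1: "d \<ge> 1"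
  shows "real (card {B. B \<subseteq> faces n d \<and> card B \<le> k \<and> real (card B) \<le> Y})
           \<le> real (k+1) * (real n powr ((real d - 1) * Y) * exp (real n))"
proof -
  define J where "J = {j. j \<le> k \<and> real j \<le> Y}"
  have fJ: "finite J" unfolding J_def by auto
  have cJ: "card J \<le> k + 1" unfolding J_def
    using card_mono[of "{..k}" "{j. j \<le> k \<and> real j \<le> Y}"] by auto
  let ?S = "\<lambda>j. {B. B \<subseteq> faces n d \<and> card B = j}"
  have sub: "{B. B \<subseteq> faces n d \<and> card B \<le> k \<and> real (card B) \<le> Y} \<subseteq> (\<Union>j\<in>J. ?S j)"
    unfolding J_def by auto
  have fin: "finite (\<Union>j\<in>J. ?S j)"
    by (rule finite_subset[of _ "Pow (faces n d)"]) (auto simp: finite_faces)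
  have "card {B. B \<subseteq> faces n d \<and> card B \<le> k \<and> real (card B) \<le> Y} \<le> card (\<Union>j\<in>J. ?S j)"
    by (rule card_mono[OF fin sub])
  also have "\<dots> \<le> (\<Sum>j\<in>J. card (?S j))" by (rule card_UN_le[OF fJ])
  finally have c0: "card {B. B \<subseteq> faces n d \<and> card B \<le> k \<and> real (card B) \<le> Y} \<le> (\<Sum>j\<in>J. card (?S j))" .
  have c1: "real (card {B. B \<subseteq> faces n d \<and> card B \<le> k \<and> real (card B) \<le> Y}) \<le> (\<Sum>j\<in>J. real (card (?S j)))"
    using of_nat_mono[OF c0, where ?'a=real] by simp
  have tm: "real (card (?S j)) \<le> real n powr ((real d - 1) * Y) * exp (real n)" if j: "j \<in> J" for j
  proof -
    let ?N = "card (faces n d)"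
    have "card (?S j) = ?N choose j" using n_subsets[OF finite_faces, of n d j] by simp
    then have "real (card (?S j)) * fact j \<le> real ?N ^ j"
      using binomial_fact_pow[of ?N j] by (metis of_nat_fact of_nat_le_iff of_nat_mult of_nat_power)
    then have a: "real (card (?S j)) \<le> real ?N ^ j / fact j" by (simp add: field_simps)
    have dj: "d * j = (d-1)*j + j" using d1 by (cases d) auto
    have pw: "(real n ^ d) ^ j = real n ^ ((d-1) * j) * real n ^ j"
    proof -
      have "(real n ^ d) ^ j = real n ^ (d*j)" by (simp add: power_mult)
      also have "\<dots> = real n ^ ((d-1) * j) * real n ^ j" by (simp only: dj power_add)
      finally show ?thesis .
    qed
    have "real ?N \<le> real n ^ d" using card_faces choose_le_pow by (metis of_nat_le_iff of_nat_power)
    then have "real ?N ^ j / fact j \<le> (real n ^ d) ^ j / fact j"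
      by (intro divide_right_mono power_mono) auto
    also have "(real n ^ d) ^ j = real n ^ ((d-1) * j) * real n ^ j"
      by (rule pw)
    finally have b: "real (card (?S j)) \<le> real n ^ ((d-1) * j) * (real n ^ j / fact j)" using a by simp
    have np: "real n > 0" using n1 by simp
    have "real n ^ ((d-1) * j) = real n powr (real ((d-1) * j))" using powr_realpow[OF np, of "(d-1)*j"] by simp
    also have "\<dots> \<le> real n powr ((real d - 1) * Y)"
    proof (rule powr_mono)
      have "real j \<le> Y" using j J_def by auto
      moreover have "real d - 1 \<ge> 0" using d1 by simp
      ultimately show "real ((d-1) * j) \<le> (real d - 1) * Y" using d1 by (simp add: of_nat_diff mult_left_mono)
    qed (use n1 in simp)
    finally have c: "real n ^ ((d-1) * j) \<le> real n powr ((real d - 1) * Y)" .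
    have e: "real n ^ j / fact j \<le> exp (real n)" by (rule pow_fact_le_exp) simp
    have "real n ^ ((d-1) * j) * (real n ^ j / fact j) \<le> real n powr ((real d - 1) * Y) * exp (real n)"
      by (intro mult_mono c e) auto
    then show ?thesis using b by linarith
  qed
  have "(\<Sum>j\<in>J. real (card (?S j))) \<le> (\<Sum>j\<in>J. real n powr ((real d - 1) * Y) * exp (real n))"
    by (rule sum_mono) (rule tm)
  also have "\<dots> = real (card J) * (real n powr ((real d - 1) * Y) * exp (real n))" by simp
  also have "\<dots> \<le> real (k+1) * (real n powr ((real d - 1) * Y) * exp (real n))"
    using cJ by (intro mult_right_mono) auto
  finally show ?thesis using c1 by linarith
qed


lemma arith_key:
  fixes D n b k \<theta> :: real
  assumes D: "D \<ge> 2" and n: "n \<ge> 8 * D^4" and b: "b \<ge> 0" and k: "k \<ge> 0"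
    and th: "\<theta> \<ge> 1 / (2 * D)"
    and h: "b * (n - D - D * n / (8 * D^4)) \<le> (1 - \<theta>) * k * n"
  shows "b \<le> k * (1 - \<theta> * (1 - 1 / (2 * D^2)))"
proof -
  define a where "a = 1 / (4 * D^3)"
  define a' where "a' = 1 / (2 * D^2)"
  have Dp: "D > 0" using D by simp
  have np: "n > 0" using n Dp by (smt (verit) zero_less_power)
  have r1: "D * n / (8 * D^4) = n / (8 * D^3)" using Dp by (simp add: field_simps power_def)
  have r2: "D \<le> n / (8 * D^3)" using n Dp by (simp add: field_simps power_def)
  have r3: "n * (1 - a) \<le> n - D - D * n / (8 * D^4)"
    unfolding a_def r1 using r2 Dp by (simp add: field_simps power_def)
  have "b * (n * (1 - a)) \<le> b * (n - D - D * n / (8 * D^4))" using r3 b by (rule mult_left_mono)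
  then have "(b * (1 - a)) * n \<le> ((1 - \<theta>) * k) * n" using h by (simp add: algebra_simps)
  then have r4: "b * (1 - a) \<le> (1 - \<theta>) * k" using np by simp
  have tp: "\<theta> \<ge> 0" using th Dp by (smt (verit) divide_nonneg_nonneg)
  have "\<theta> * a' \<ge> 1 / (2 * D) * a'" using th unfolding a'_def by (intro mult_right_mono) auto
  moreover have "1 / (2 * D) * a' = a" unfolding a_def a'_def using Dp by (simp add: field_simps power_def)
  ultimately have r5: "\<theta> * a' \<ge> a" by simp
  have D2: "D^2 \<ge> 1" using D by (intro one_le_power) simp
  have a'1: "a' \<le> 1" unfolding a'_def using D2 by (subst divide_le_eq_1_pos) auto
  have a0: "a \<ge> 0" unfolding a_def using Dp by simp
  have D3: "D^3 \<ge> 1" using D by (intro one_le_power) simp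
  have a1: "a < 1" unfolding a_def using D3 Dp by (subst divide_less_eq_1_pos) auto
  have "a * \<theta> * (1 - a') \<ge> 0" using a0 tp a'1 by simp
  then have r6: "1 - \<theta> \<le> (1 - a) * (1 - \<theta> * (1 - a'))" using r5 by (simp add: algebra_simps)
  have "b * (1 - a) \<le> (1 - a) * (1 - \<theta> * (1 - a')) * k" using r4 r6 k
    by (smt (verit) mult_right_mono)
  then have "b * (1 - a) \<le> (k * (1 - \<theta> * (1 - a'))) * (1 - a)" by (simp add: algebra_simps)
  then have "b \<le> k * (1 - \<theta> * (1 - a'))" using a1 by simp
  then show ?thesis unfolding a'_def .
qed


theorem lemma8:
  fixes d :: nat
  assumes "d \<ge> 2"
  shows "\<exists>c::real. c > 0 \<and> (\<exists>N::nat. \<forall>n\<ge>N. \<forall>k::nat. \<forall>\<theta>::real.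
           real k \<ge> real n / (3 * real d) \<and> \<theta> \<ge> 1 / (2 * real d) \<longrightarrow>
           real (card {X. X \<subseteq> faces n d \<and> card X = k \<and>
                         real (beta n d X) \<le> (1 - \<theta>) * real k * real n})
             \<le> (c * real n powr ((real d - 1) * (1 - \<theta> * (1 - 1 / (2 * (real d)^2))))) ^ k)"
proof -
  define q :: nat where "q = 8 * d^4"
  define c :: real where "c = 2 ^ (q*d*d + q*d + 1) * exp (3 * real d)"
  have d1: "d \<ge> 1" using assms by simp
  have qpos: "q > 0" using d1 q_def by simp
  have cpos: "c > 0" unfolding c_def by simp
  have main: "real (card {X. X \<subseteq> faces n d \<and> card X = k \<and>
                         real (beta n d X) \<le> (1 - \<theta>) * real k * real n})
             \<le> (c * real n powr ((real d - 1) * (1 - \<theta> * (1 - 1 / (2 * (real d)^2))))) ^ k"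
    if hn: "n \<ge> q" and hk: "real k \<ge> real n / (3 * real d)" and ht: "\<theta> \<ge> 1 / (2 * real d)"
    for n k \<theta>
  proof -
    define y where "y = 1 - \<theta> * (1 - 1 / (2 * (real d)^2))"
    define S where "S = {X. X \<subseteq> faces n d \<and> card X = k \<and> real (beta n d X) \<le> (1 - \<theta>) * real k * real n}"
    define FH where "FH = {H. H \<subseteq> faces n (d-1) \<and> n * card H \<le> q*d*k}"
    define FB where "FB = {B. B \<subseteq> faces n d \<and> card B \<le> k \<and> real (card B) \<le> real k * y}"
    define Sg where "Sg = (SIGMA H:FH. Pow (cand n d H))"
    define T where "T = Sg \<times> FB"
    define \<Phi> where "\<Phi> X = ((heavy n d q X, X - bad n d q X), bad n d q X)" for X
    have n1: "n \<ge> 1" using hn qpos by simp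
    have hnr: "8 * real d ^ 4 \<le> real n" using hn unfolding q_def
      by (metis of_nat_le_iff of_nat_mult of_nat_numeral of_nat_power)
    have badsub: "bad n d q X \<subseteq> X" for X unfolding bad_def by auto
    have inj: "inj_on \<Phi> S"
    proof (rule inj_onI)
      fix X Y assume "X \<in> S" "Y \<in> S" and e: "\<Phi> X = \<Phi> Y"
      have pr: "X - bad n d q X = snd (fst (\<Phi> X))" "bad n d q X = snd (\<Phi> X)" for X
        by (simp_all add: \<Phi>_def)
      have "X - bad n d q X = Y - bad n d q Y" "bad n d q X = bad n d q Y"
        using pr[of X] pr[of Y] e by metis+
      then show "X = Y" using badsub[of X] badsub[of Y] by blast
    qed
    have key_bad: "real (card (bad n d q X)) \<le> real k * y" if XS: "X \<in> S" for X
    proof -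
      have X: "X \<subseteq> faces n d" "card X = k" "real (beta n d X) \<le> (1-\<theta>) * real k * real n"
        using XS unfolding S_def by auto
      let ?B = "bad n d q X"
      have fX: "finite X" using X(1) finite_faces finite_subset by blast
      have fB: "finite ?B" using badsub fX finite_subset by blast
      have "(\<Sum>\<tau>\<in>?B. real n - real d - real d * real n / real q) \<le> (\<Sum>\<tau>\<in>?B. real (card (Uf n d X \<tau>)))"
      proof (rule sum_mono)
        fix \<tau> assume tB: "\<tau> \<in> ?B"
        then have tX: "\<tau> \<in> X" using badsub by auto
        have "\<forall>\<rho>\<in>faces n (d-1). \<rho> \<subseteq> \<tau> \<longrightarrow> q * dg X \<rho> \<le> n"
          using tB unfolding bad_def heavy_def by auto
        then show "real n - real d - real d * real n / real q \<le> real (card (Uf n d X \<tau>))"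
          by (rule bad_U[OF d1 X(1) tX qpos])
      qed
      also have "\<dots> = real (\<Sum>\<tau>\<in>?B. card (Uf n d X \<tau>))" by simp
      also have "\<dots> \<le> real (beta n d X)" using of_nat_mono[OF beta_ge[OF X(1) badsub], where ?'a=real] by simp
      finally have h: "real (card ?B) * (real n - real d - real d * real n / (8 * real d^4)) \<le> (1 - \<theta>) * real k * real n"
        using X(3) by (simp add: q_def)
      show ?thesis unfolding y_def
        by (rule arith_key[OF _ _ _ _ ht h]) (use assms hnr in auto)
    qed
    have PhiT: "\<Phi> ` S \<subseteq> T"
    proof
      fix Z assume "Z \<in> \<Phi> ` S"
      then obtain X where XS: "X \<in> S" and Z: "Z = \<Phi> X" by auto
      have X: "X \<subseteq> faces n d" "card X = k" using XS unfolding S_def by auto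
      have "heavy n d q X \<in> FH" unfolding FH_def
        using heavy_count[OF d1 X(1), of q] X(2) by (auto simp: heavy_def)
      moreover have "X - bad n d q X \<subseteq> cand n d (heavy n d q X)"
        using X(1) unfolding bad_def cand_def by auto
      moreover have "bad n d q X \<in> FB"
      proof -
        have b1: "bad n d q X \<subseteq> faces n d" using badsub[of X] X(1) by blast
        have fX: "finite X" using X(1) finite_faces finite_subset by blast
        have b2: "card (bad n d q X) \<le> k" using card_mono[OF fX badsub[of X]] X(2) by simp
        show ?thesis unfolding FB_def using b1 b2 key_bad[OF XS] by blast
      qed
      ultimately show "Z \<in> T" unfolding T_def Sg_def Z \<Phi>_def by auto
    qed
    have fFH: "finite FH" unfolding FH_def
      by (rule finite_subset[of _ "Pow (faces n (d-1))"]) (auto simp: finite_faces)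
    have fFB: "finite FB" unfolding FB_def
      by (rule finite_subset[of _ "Pow (faces n d)"]) (auto simp: finite_faces)
    have fcand: "finite (cand n d H)" for H unfolding cand_def using finite_faces by auto
    have fSg: "finite Sg" unfolding Sg_def using fFH fcand by auto
    have fT: "finite T" unfolding T_def using fSg fFB by auto
    have "card S \<le> card T" using card_inj_on_le[OF inj PhiT fT] .
    also have "card T = card Sg * card FB" unfolding T_def by (simp add: card_cartesian_product)
    finally have c1: "real (card S) \<le> real (card Sg) * real (card FB)"
      by (metis of_nat_le_iff of_nat_mult)
    have "card Sg = (\<Sum>H\<in>FH. card (Pow (cand n d H)))" unfolding Sg_def
      by (rule card_SigmaI[OF fFH]) (simp add: fcand)
    also have "\<dots> \<le> (\<Sum>H\<in>FH. 2 ^ (q*d*k))"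
    proof (rule sum_mono)
      fix H assume H: "H \<in> FH"
      have "card (cand n d H) \<le> card H * n" using cand_card[OF d1] H unfolding FH_def by auto
      also have "\<dots> \<le> q*d*k" using H unfolding FH_def by (simp add: mult.commute)
      finally show "card (Pow (cand n d H)) \<le> 2 ^ (q*d*k)"
        using fcand by (simp add: card_Pow power_increasing)
    qed
    also have "\<dots> = card FH * 2 ^ (q*d*k)" by simp
    also have "\<dots> \<le> 2 ^ (d * (q*d*k)) * 2 ^ (q*d*k)"
      by (rule mult_le_mono1) (use FH_bound[OF n1 d1, of "q*d*k"] in \<open>simp only: FH_def\<close>)
    finally have c2': "card Sg \<le> 2 ^ (d * (q*d*k)) * 2 ^ (q*d*k)" .
    have c2: "real (card Sg) \<le> 2 ^ (d * (q*d*k)) * 2 ^ (q*d*k)"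
      using of_nat_mono[OF c2', where ?'a=real] by simp
    have "real n \<le> real k * (3 * real d)" using hk d1 by (simp add: pos_divide_le_eq mult.commute)
    then have en: "exp (real n) \<le> exp (real k * (3 * real d))" by simp
    have "k + 1 \<le> 2 ^ k" by (induction k) auto
    then have k2: "real (k+1) \<le> 2 ^ k" using of_nat_mono[where ?'a=real] by fastforce
    define P where "P = real n powr ((real d - 1) * (real k * y))"
    have Pp: "P \<ge> 0" unfolding P_def by simp
    have "real (card FB) \<le> real (k+1) * (P * exp (real n))"
      using FB_bound[OF n1 d1, of k "real k * y"] unfolding FB_def P_def .
    also have "\<dots> \<le> 2 ^ k * (P * exp (real k * (3 * real d)))"
      using k2 en Pp by (intro mult_mono) auto
    finally have c3: "real (card FB) \<le> 2 ^ k * (P * exp (real k * (3 * real d)))" .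
    have "real (card S) \<le> (2 ^ (d * (q*d*k)) * 2 ^ (q*d*k)) * (2 ^ k * (P * exp (real k * (3 * real d))))"
      using c1 mult_mono[OF c2 c3] by (meson order_trans of_nat_0_le_iff zero_le_power zero_le_numeral mult_nonneg_nonneg)
    also have "\<dots> = (2::real) ^ (d * (q*d*k) + q*d*k + k) * exp (real k * (3 * real d)) * P"
      by (simp add: power_add)
    also have "d * (q*d*k) + q*d*k + k = (q*d*d + q*d + 1) * k" by (simp add: algebra_simps)
    also have "(2::real) ^ ((q*d*d + q*d + 1) * k) * exp (real k * (3 * real d)) * P
             = (c * real n powr ((real d - 1) * y)) ^ k"
    proof -
      have "(2::real) ^ ((q*d*d + q*d + 1) * k) = (2 ^ (q*d*d + q*d + 1)) ^ k" by (rule power_mult)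
      moreover have "exp (real k * (3 * real d)) = exp (3 * real d) ^ k" by (rule exp_of_nat_mult)
      moreover have "P = (real n powr ((real d - 1) * y)) ^ k"
        unfolding P_def using n1 by (simp add: powr_power mult.commute mult.left_commute)
      ultimately show ?thesis unfolding c_def by (simp add: power_mult_distrib)
    qed
    finally show ?thesis unfolding S_def y_def .
  qed
  show ?thesis
    by (rule exI[of _ c], rule conjI[OF cpos], rule exI[of _ q]) (use main in blast)
qed

end
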